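(* Let $R\ge1$ and let $G$ be an observable of $R$ replicas. For every finite box $\Lambda$ and every $\beta$, $$\Delta_2 G=-\beta R\Big[\sum_{k=1}^{R}\langle G\,q_{k,R+1}\rangle-(R+1)\langle G\,q_{R+1,R+2}\rangle+\langle G\rangle\langle q_{1,2}\rangle\Big],$$ where $\Delta_2 G=\sum_{l=1}^{R}\big(\mathrm{Av}(\Omega_R[h(\sigma^{(l)})]\,\Omega_R[G])-\mathrm{Av}(\Omega_R[h(\sigma^{(l)})])\,\mathrm{Av}(\Omega_R[G])\big)$ and $h(\sigma)=H_\Lambda(\sigma)/|\Lambda|$.
   Context: For each finite $d$-dimensional parallelepiped $\Lambda\subset\mathbb{Z}^d$ let $\Sigma_\Lambda=\{-1,1\}^\Lambda$, and for $X\subset\Lambda$ let $\sigma_X=\prod_{i\in X}\sigma_i$ (with $\sigma_\emptyset=0$). Let $\{J_X\}$ be independent centered Gaussian random variables with variances $\mathrm{Av}(J_X^2)=\Delta_X^2$, translation invariant, where $\mathrm{Av}$ denotes expectation over the $J$'s. The Hamiltonian is $H_\Lambda(\sigma)=-\sum_{X\subset\Lambda}J_X\sigma_X$, with normalized covariance $c_\Lambda(\sigma,\tau)=\frac{1}{|\Lambda|}\sum_{X\subset\Lambda}\Delta_X^2\sigma_X\tau_X$. Let $\mathcal{Z}(\beta)=\sum_{\sigma}e^{-\beta H_\Lambda(\sigma)}$ and for $n\ge1$ the $n$-replica random Gibbs state $\Omega_n(f)=\sum_{\sigma^{(1)},\dots,\sigma^{(n)}}f\,e^{-\beta\sum_{i=1}^n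 H_\Lambda(\sigma^{(i)})}/\mathcal{Z}(\beta)^n$. An observable of $R$ replicas is a smooth function $G$ of an $R\times R$ real matrix with $|G|\le1$, evaluated at $(c_\Lambda(\sigma^{(k)},\sigma^{(l)}))_{k,l\le R}$. Notation: $\langle G\rangle=\mathrm{Av}\,\Omega_R(G)$; $\langle G\,q_{k,l}\rangle=\mathrm{Av}\,\Omega_n\big(G((c_\Lambda(\sigma^{(i)},\sigma^{(j)}))_{i,j\le R})\,c_\Lambda(\sigma^{(k)},\sigma^{(l)})\big)$ with $n=\max(R,k,l)$; $\langle q_{1,2}\rangle=\mathrm{Av}\,\Omega_2(c_\Lambda(\sigma^{(1)},\sigma^{(2)}))$. *)

theory Defs
  imports "HOL-Analysis.Analysis" "HOL-Probability.Probability"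
begin

fun Ck :: "nat \<Rightarrow> ('a::real_normed_vector \<Rightarrow> real) \<Rightarrow> bool" where
  "Ck 0 f = continuous_on UNIV f"
| "Ck (Suc n) f = (\<exists>f'. (\<forall>x. (f has_derivative f' x) (at x)) \<and> (\<forall>v. Ck n (\<lambda>x. f' x v)))"

definition smooth_fun :: "('a::real_normed_vector \<Rightarrow> real) \<Rightarrow> bool" where
  "smooth_fun f \<longleftrightarrow> (\<forall>n. Ck n f)"

definition lattice_box :: "int^'d \<Rightarrow> int^'d \<Rightarrow> (int^'d) set" where
  "lattice_box a b = {x. \<forall>i. a$i \<le> x$i \<and> x$i \<le> b$i}"

definition configs :: "'s set \<Rightarrow> ('s \<Rightarrow> real) set" where
  "configs \<Lambda> = PiE \<Lambda> (\<lambda>_. {-1, 1})"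

definition spin_prod :: "('s \<Rightarrow> real) \<Rightarrow> 's set \<Rightarrow> real" where
  "spin_prod \<sigma> X = (if X = {} then 0 else (\<Prod>i\<in>X. \<sigma> i))"

definition hamiltonian :: "'s set \<Rightarrow> ('s set \<Rightarrow> real) \<Rightarrow> ('s \<Rightarrow> real) \<Rightarrow> real" where
  "hamiltonian \<Lambda> J \<sigma> = - (\<Sum>X\<in>Pow \<Lambda>. J X * spin_prod \<sigma> X)"

definition cov :: "'s set \<Rightarrow> ('s set \<Rightarrow> real) \<Rightarrow> ('s \<Rightarrow> real) \<Rightarrow> ('s \<Rightarrow> real) \<Rightarrow> real" where
  "cov \<Lambda> \<Delta> \<sigma> \<tau> = (1 / real (card \<Lambda>)) * (\<Sum>X\<in>Pow \<Lambda>. (\<Delta> X)\<^sup>2 * spin_prod \<sigma> X * spin_prod \<tau> X)"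

definition partition_fn :: "'s set \<Rightarrow> ('s set \<Rightarrow> real) \<Rightarrow> real \<Rightarrow> real" where
  "partition_fn \<Lambda> J \<beta> = (\<Sum>\<sigma>\<in>configs \<Lambda>. exp (- \<beta> * hamiltonian \<Lambda> J \<sigma>))"

(* replica Gibbs state Omega_n, replicas indexed by the finite set I (n = card I) *)
definition gibbs :: "'s set \<Rightarrow> ('s set \<Rightarrow> real) \<Rightarrow> real \<Rightarrow> 'i set \<Rightarrow> (('i \<Rightarrow> 's \<Rightarrow> real) \<Rightarrow> real) \<Rightarrow> real" where
  "gibbs \<Lambda> J \<beta> I f =
     (\<Sum>s\<in>PiE I (\<lambda>_. configs \<Lambda>). f s * exp (- \<beta> * (\<Sum>i\<in>I. hamiltonian \<Lambda> J (s i))))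
       / partition_fn \<Lambda> J \<beta> ^ card I"

(* the couplings J_X = Delta_X * z_X with z_X i.i.d. standard Gaussians, so that
   J_X are independent centered Gaussians with variance Delta_X^2 *)
definition std_gauss :: "real measure" where
  "std_gauss = density lborel std_normal_density"

definition coupling :: "('s set \<Rightarrow> real) \<Rightarrow> ('s set \<Rightarrow> real) \<Rightarrow> 's set \<Rightarrow> real" where
  "coupling \<Delta> z X = \<Delta> X * z X"

definition Av :: "'s set \<Rightarrow> (('s set \<Rightarrow> real) \<Rightarrow> real) \<Rightarrow> real" where
  "Av \<Lambda> F = (\<integral>z. F z \<partial>(PiM (Pow \<Lambda>) (\<lambda>_. std_gauss)))"

definition Omega :: "'s set \<Rightarrow> ('s set \<Rightarrow> real) \<Rightarrow> real \<Rightarrow> 'i set \<Rightarrow> (('i \<Rightarrow> 's \<Rightarrow> real) \<Rightarrow> real) \<Rightarrow> ('s set \<Rightarrow> real) \<Rightarrow> real" where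
  "Omega \<Lambda> \<Delta> \<beta> I f z = gibbs \<Lambda> (coupling \<Delta> z) \<beta> I f"

definition overlap_mat :: "'s set \<Rightarrow> ('s set \<Rightarrow> real) \<Rightarrow> ('r::finite \<Rightarrow> 's \<Rightarrow> real) \<Rightarrow> real^'r^'r" where
  "overlap_mat \<Lambda> \<Delta> s = (\<chi> k l. cov \<Lambda> \<Delta> (s k) (s l))"

definition h_energy :: "'s set \<Rightarrow> ('s set \<Rightarrow> real) \<Rightarrow> ('s \<Rightarrow> real) \<Rightarrow> real" where
  "h_energy \<Lambda> J \<sigma> = hamiltonian \<Lambda> J \<sigma> / real (card \<Lambda>)"

end

theory Submission
  imports Defs
begin

lemma std_normal_deriv:
  "(std_normal_density has_real_derivative (- x * std_normal_density x)) (at x)"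
  unfolding std_normal_density_def
  by (auto intro!: derivative_eq_intros simp: field_simps power2_eq_square)

lemma sq_half_at_top: "LIM x at_top. (x::real)\<^sup>2 / 2 :> at_top"
proof -
  have "LIM x at_top. (1/2) * (x::real)^2 :> at_top"
    by (rule filterlim_tendsto_pos_mult_at_top[OF tendsto_const]) (auto intro!: filterlim_pow_at_top filterlim_ident)
  then show ?thesis by simp
qed

lemma stein_1d:
  fixes f f' :: "real \<Rightarrow> real"
  assumes der: "\<And>x. (f has_real_derivative f' x) (at x)"
    and cont: "\<And>x. isCont f' x"
    and bf: "\<And>x. \<bar>f x\<bar> \<le> B" and bf': "\<And>x. \<bar>f' x\<bar> \<le> B"
  shows "(\<integral>x. std_normal_density x * (x * f x) \<partial>lborel) = (\<integral>x. std_normal_density x * f' x \<partial>lborel)"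
proof -
  let ?F = "\<lambda>x. std_normal_density x * f x"
  let ?g = "\<lambda>x. std_normal_density x * f' x - std_normal_density x * (x * f x)"
  have fm: "f \<in> borel_measurable borel"
    using der by (intro borel_measurable_continuous_onI continuous_at_imp_continuous_on) (auto intro: DERIV_isCont)
  have fm': "f' \<in> borel_measurable borel"
    using cont by (intro borel_measurable_continuous_onI continuous_at_imp_continuous_on) auto
  have i1: "integrable lborel (\<lambda>x. std_normal_density x * f' x)"
  proof (rule Bochner_Integration.integrable_bound[where f="\<lambda>x. B * std_normal_density x"])
    show "integrable lborel (\<lambda>x. B * std_normal_density x)" by simp
    show "AE x in lborel. norm (std_normal_density x * f' x) \<le> norm (B * std_normal_density x)"
      using bf' by (auto simp: abs_mult intro!: always_eventually allI) (smt (verit) mult.commute mult_left_mono normal_density_nonneg)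
  qed (use fm' in auto)
  have i2: "integrable lborel (\<lambda>x. std_normal_density x * (x * f x))"
  proof (rule Bochner_Integration.integrable_bound[where f="\<lambda>x. B * (std_normal_density x * \<bar>x\<bar>^1)"])
    show "integrable lborel (\<lambda>x. B * (std_normal_density x * \<bar>x\<bar>^1))"
      using integrable_std_normal_moment_abs[of 1] by simp
    show "AE x in lborel. norm (std_normal_density x * (x * f x)) \<le> norm (B * (std_normal_density x * \<bar>x\<bar>^1))"
      proof (intro always_eventually allI)
      fix x
      have "std_normal_density x * \<bar>x\<bar> * \<bar>f x\<bar> \<le> std_normal_density x * \<bar>x\<bar> * \<bar>B\<bar>"
        using bf[of x] by (intro mult_left_mono) auto
      then show "norm (std_normal_density x * (x * f x)) \<le> norm (B * (std_normal_density x * \<bar>x\<bar>^1))"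
        by (simp add: abs_mult mult_ac)
    qed
  qed (use fm in auto)
  have "(LBINT x=-\<infinity>..\<infinity>. ?g x) = 0 - 0"
  proof (rule interval_integral_FTC_integrable[where F="?F"])
    show "(?F has_vector_derivative ?g x) (at x)" for x
      unfolding has_real_derivative_iff_has_vector_derivative[symmetric]
      using std_normal_deriv[of x] der[of x]
      by (auto intro!: derivative_eq_intros simp: field_simps)
    show "isCont ?g x" for x
      using cont[of x] DERIV_isCont[OF der[of x]] DERIV_isCont[OF std_normal_deriv[of x]]
      by (intro continuous_intros) auto
    show "set_integrable lborel (einterval (- \<infinity>) \<infinity>) ?g"
      unfolding einterval_eq_UNIV set_integrable_def using i1 i2 by simp
    have phi_top: "(std_normal_density \<longlongrightarrow> 0) at_top"
      unfolding std_normal_density_def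
      by (rule tendsto_mult_right_zero, rule filterlim_compose[OF exp_at_bot])
         (auto simp: filterlim_uminus_at_bot sq_half_at_top)
    have phi_bot: "(std_normal_density \<longlongrightarrow> 0) at_bot"
    proof -
      have "((\<lambda>x. std_normal_density (- x)) \<longlongrightarrow> 0) at_top"
      proof -
        have "(\<lambda>x. std_normal_density (- x)) = std_normal_density"
          by (simp add: fun_eq_iff std_normal_density_def)
        then show ?thesis using phi_top by (simp only:)
      qed
      then show ?thesis by (simp add: at_bot_mirror filterlim_filtermap)
    qed
    have lim: "(?F \<longlongrightarrow> 0) F" if "(std_normal_density \<longlongrightarrow> 0) F" for F
    proof (rule Lim_null_comparison[where g="\<lambda>x. B * std_normal_density x"])
      show "\<forall>\<^sub>F x in F. norm (?F x) \<le> B * std_normal_density x"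
      proof (intro always_eventually allI)
        fix x
        have "std_normal_density x * \<bar>f x\<bar> \<le> std_normal_density x * B"
          using bf[of x] by (intro mult_left_mono) auto
        then show "norm (?F x) \<le> B * std_normal_density x" by (simp add: abs_mult mult_ac)
      qed
      show "((\<lambda>x. B * std_normal_density x) \<longlongrightarrow> 0) F"
        using tendsto_mult_right_zero[OF that, of B] .
    qed
    show "((?F \<circ> real_of_ereal) \<longlongrightarrow> 0) (at_right (- \<infinity>))"
      unfolding ereal_tendsto_simps using lim[OF phi_bot] .
    show "((?F \<circ> real_of_ereal) \<longlongrightarrow> 0) (at_left \<infinity>)"
      unfolding ereal_tendsto_simps using lim[OF phi_top] .
  qed simp
  then have "(\<integral>x. ?g x \<partial>lborel) = 0"
    by (simp add: interval_lebesgue_integral_def einterval_eq_UNIV set_lebesgue_integral_def)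
  then show ?thesis using i1 i2 by simp
qed


lemma prob_std_gauss: "prob_space std_gauss"
  unfolding std_gauss_def by (rule prob_space_normal_density) simp

lemma sets_std_gauss[simp, measurable_cong]: "sets std_gauss = sets borel"
  unfolding std_gauss_def by simp

lemma space_std_gauss[simp]: "space std_gauss = UNIV"
  unfolding std_gauss_def by simp

lemma integral_std_gauss:
  "f \<in> borel_measurable borel \<Longrightarrow> (\<integral>x. f x \<partial>std_gauss) = (\<integral>x. std_normal_density x * f x \<partial>lborel)"
  unfolding std_gauss_def by (subst integral_density) auto

lemma integrable_std_gauss_id: "integrable std_gauss (\<lambda>x. x)"
  unfolding std_gauss_def
  by (subst integrable_density) (use integrable_std_normal_moment[of 1] in auto)

interpretation gauss_prod: product_prob_space "\<lambda>_. std_gauss" I for I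
  unfolding product_prob_space_def product_prob_space_axioms_def product_sigma_finite_def
  by (simp add: prob_std_gauss prob_space_imp_sigma_finite)

lemma integrable_coord:
  assumes "finite P" "Y \<in> P"
  shows "integrable (PiM P (\<lambda>_. std_gauss)) (\<lambda>z. z Y)"
proof -
  have "distr (PiM P (\<lambda>_. std_gauss)) std_gauss (\<lambda>z. z Y) = std_gauss"
    using distr_PiM_component[of P "\<lambda>_. std_gauss" Y] assms prob_std_gauss by auto
  then show ?thesis
    using integrable_distr_eq[of "\<lambda>z. z Y" "PiM P (\<lambda>_. std_gauss)" std_gauss "\<lambda>x. x"] integrable_std_gauss_id assms
    by simp
qed

lemma integrable_bounded_PiM:
  fixes F :: "_ \<Rightarrow> real" and C :: real
  assumes "F \<in> borel_measurable (PiM P (\<lambda>_. std_gauss))" "\<And>z. \<bar>F z\<bar> \<le> C"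
  shows "integrable (PiM P (\<lambda>_. std_gauss)) F"
  by (rule gauss_prod.integrable_const_bound[where B=C]) (use assms in auto)

lemma integrable_coord_mult:
  fixes F :: "_ \<Rightarrow> real" and C :: real
  assumes "finite P" "Y \<in> P" "F \<in> borel_measurable (PiM P (\<lambda>_. std_gauss))" "\<And>z. \<bar>F z\<bar> \<le> C"
  shows "integrable (PiM P (\<lambda>_. std_gauss)) (\<lambda>z. z Y * F z)"
proof (rule Bochner_Integration.integrable_bound[where f="\<lambda>z. C * \<bar>z Y\<bar>"])
  show "integrable (PiM P (\<lambda>_. std_gauss)) (\<lambda>z. C * \<bar>z Y\<bar>)"
    using integrable_coord[OF assms(1,2)] by auto
  show "(\<lambda>z. z Y * F z) \<in> borel_measurable (PiM P (\<lambda>_. std_gauss))"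
    using assms by measurable
  show "AE z in PiM P (\<lambda>_. std_gauss). norm (z Y * F z) \<le> norm (C * \<bar>z Y\<bar>)"
  proof (intro always_eventually allI)
    fix z
    have "\<bar>z Y\<bar> * \<bar>F z\<bar> \<le> \<bar>z Y\<bar> * C" using assms(4)[of z] by (intro mult_left_mono) auto
    moreover have "0 \<le> C" using assms(4)[of z] by linarith
    ultimately show "norm (z Y * F z) \<le> norm (C * \<bar>z Y\<bar>)" by (simp add: abs_mult mult_ac)
  qed
qed

lemma stein_PiM:
  fixes F D :: "('a \<Rightarrow> real) \<Rightarrow> real"
  assumes P: "finite P" "Y \<in> P"
    and Fm: "F \<in> borel_measurable (PiM P (\<lambda>_. std_gauss))"
    and Dm: "D \<in> borel_measurable (PiM P (\<lambda>_. std_gauss))"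
    and bF: "\<And>z. \<bar>F z\<bar> \<le> C" and bD: "\<And>z. \<bar>D z\<bar> \<le> C"
    and der: "\<And>z x. ((\<lambda>t. F (z(Y:=t))) has_real_derivative D (z(Y:=x))) (at x)"
    and cont: "\<And>z x. isCont (\<lambda>t. D (z(Y:=t))) x"
  shows "(\<integral>z. z Y * F z \<partial>PiM P (\<lambda>_. std_gauss)) = (\<integral>z. D z \<partial>PiM P (\<lambda>_. std_gauss))"
proof -
  define P' where "P' = P - {Y}"
  have PP: "P = insert Y P'" "finite P'" "Y \<notin> P'" using P by (auto simp: P'_def)
  have i1: "integrable (PiM (insert Y P') (\<lambda>_. std_gauss)) (\<lambda>z. z Y * F z)"
    using integrable_coord_mult[OF P Fm bF] PP by simp
  have i2: "integrable (PiM (insert Y P') (\<lambda>_. std_gauss)) D"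
    using integrable_bounded_PiM[OF Dm bD] PP by simp
  have "(\<integral>z. z Y * F z \<partial>PiM P (\<lambda>_. std_gauss)) =
     (\<integral>x. (\<integral>y. (x(Y:=y)) Y * F (x(Y:=y)) \<partial>std_gauss) \<partial>PiM P' (\<lambda>_. std_gauss))"
    unfolding PP(1) by (rule gauss_prod.product_integral_insert[OF PP(2,3) i1])
  also have "\<dots> = (\<integral>x. (\<integral>y. D (x(Y:=y)) \<partial>std_gauss) \<partial>PiM P' (\<lambda>_. std_gauss))"
  proof (rule Bochner_Integration.integral_cong[OF refl])
    fix x :: "'a \<Rightarrow> real"
    have dd: "\<And>t. ((\<lambda>t. F (x(Y:=t))) has_real_derivative D (x(Y:=t))) (at t)" using der .
    have m1: "(\<lambda>t. F (x(Y:=t))) \<in> borel_measurable borel"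
      by (intro borel_measurable_continuous_onI continuous_at_imp_continuous_on ballI DERIV_isCont[OF dd])
    have m2: "(\<lambda>t. D (x(Y:=t))) \<in> borel_measurable borel"
      by (intro borel_measurable_continuous_onI continuous_at_imp_continuous_on ballI cont)
    have "(\<integral>y. (x(Y:=y)) Y * F (x(Y:=y)) \<partial>std_gauss) = (\<integral>y. std_normal_density y * (y * F (x(Y:=y))) \<partial>lborel)"
      using m1 by (subst integral_std_gauss) auto
    also have "\<dots> = (\<integral>y. std_normal_density y * D (x(Y:=y)) \<partial>lborel)"
      by (rule stein_1d[OF dd cont bF bD])
    also have "\<dots> = (\<integral>y. D (x(Y:=y)) \<partial>std_gauss)"
      using m2 by (subst integral_std_gauss) auto
    finally show "(\<integral>y. (x(Y:=y)) Y * F (x(Y:=y)) \<partial>std_gauss) = (\<integral>y. D (x(Y:=y)) \<partial>std_gauss)" .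
  qed
  also have "\<dots> = (\<integral>z. D z \<partial>PiM P (\<lambda>_. std_gauss))"
    unfolding PP(1) by (rule gauss_prod.product_integral_insert[OF PP(2,3) i2, symmetric])
  finally show ?thesis .
qed


definition wt :: "'s set \<Rightarrow> ('s set \<Rightarrow> real) \<Rightarrow> real \<Rightarrow> ('s \<Rightarrow> real) \<Rightarrow> real" where
  "wt \<Lambda> J \<beta> \<sigma> = exp (- \<beta> * hamiltonian \<Lambda> J \<sigma>)"

definition om :: "'s set \<Rightarrow> ('s set \<Rightarrow> real) \<Rightarrow> real \<Rightarrow> (('s \<Rightarrow> real) \<Rightarrow> real) \<Rightarrow> real" where
  "om \<Lambda> J \<beta> g = (\<Sum>\<sigma>\<in>configs \<Lambda>. g \<sigma> * wt \<Lambda> J \<beta> \<sigma>) / partition_fn \<Lambda> J \<beta>"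

lemma wt_pos: "0 < wt \<Lambda> J \<beta> \<sigma>" by (simp add: wt_def)

lemma finite_configs: "finite \<Lambda> \<Longrightarrow> finite (configs \<Lambda>)"
  unfolding configs_def by (rule finite_PiE) auto

lemma configs_ne: "configs \<Lambda> \<noteq> {}"
  unfolding configs_def by (simp add: PiE_eq_empty_iff)

lemma partition_wt: "partition_fn \<Lambda> J \<beta> = (\<Sum>\<sigma>\<in>configs \<Lambda>. wt \<Lambda> J \<beta> \<sigma>)"
  by (simp add: partition_fn_def wt_def)

lemma partition_pos: "finite \<Lambda> \<Longrightarrow> 0 < partition_fn \<Lambda> J \<beta>"
  unfolding partition_wt by (rule sum_pos) (auto simp: finite_configs configs_ne wt_pos)

lemma finite_PiE_configs: "finite \<Lambda> \<Longrightarrow> finite I \<Longrightarrow> finite (PiE I (\<lambda>_. configs \<Lambda>))"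
  by (rule finite_PiE) (auto simp: finite_configs)

lemma exp_sum_wt: "finite I \<Longrightarrow>
   exp (- \<beta> * (\<Sum>i\<in>I. hamiltonian \<Lambda> J (s i))) = (\<Prod>i\<in>I. wt \<Lambda> J \<beta> (s i))"
  by (simp add: sum_distrib_left exp_sum wt_def)

lemma Zpow: "finite \<Lambda> \<Longrightarrow> finite I \<Longrightarrow>
   partition_fn \<Lambda> J \<beta> ^ card I = (\<Sum>s\<in>PiE I (\<lambda>_. configs \<Lambda>). \<Prod>i\<in>I. wt \<Lambda> J \<beta> (s i))"
  unfolding partition_wt
  by (subst prod_sum_PiE[symmetric]) (auto simp: finite_configs)

lemma gibbs_wt: assumes "finite I" shows "gibbs \<Lambda> J \<beta> I f =
   (\<Sum>s\<in>PiE I (\<lambda>_. configs \<Lambda>). f s * (\<Prod>i\<in>I. wt \<Lambda> J \<beta> (s i))) / partition_fn \<Lambda> J \<beta> ^ card I"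
  unfolding gibbs_def by (simp only: exp_sum_wt[OF assms])

lemma gibbs_cong: "(\<And>s. s \<in> PiE I (\<lambda>_. configs \<Lambda>) \<Longrightarrow> f s = g s) \<Longrightarrow> gibbs \<Lambda> J \<beta> I f = gibbs \<Lambda> J \<beta> I g"
  unfolding gibbs_def by (intro arg_cong2[where f="(/)"] sum.cong) auto

lemma gibbs_add: "gibbs \<Lambda> J \<beta> I (\<lambda>s. f s + g s) = gibbs \<Lambda> J \<beta> I f + gibbs \<Lambda> J \<beta> I g"
  unfolding gibbs_def by (simp add: distrib_right sum.distrib add_divide_distrib)

lemma gibbs_diff: "gibbs \<Lambda> J \<beta> I (\<lambda>s. f s - g s) = gibbs \<Lambda> J \<beta> I f - gibbs \<Lambda> J \<beta> I g"
  unfolding gibbs_def by (simp add: left_diff_distrib sum_subtractf diff_divide_distrib)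

lemma gibbs_cmult: "gibbs \<Lambda> J \<beta> I (\<lambda>s. c * f s) = c * gibbs \<Lambda> J \<beta> I f"
  unfolding gibbs_def by (simp add: sum_distrib_left mult_ac)

lemma gibbs_multc: "gibbs \<Lambda> J \<beta> I (\<lambda>s. f s * c) = gibbs \<Lambda> J \<beta> I f * c"
  using gibbs_cmult[of \<Lambda> J \<beta> I c f] by (simp add: mult_ac)

lemma gibbs_minus: "gibbs \<Lambda> J \<beta> I (\<lambda>s. - f s) = - gibbs \<Lambda> J \<beta> I f"
  using gibbs_cmult[of \<Lambda> J \<beta> I "-1" f] by simp

lemma gibbs_divc: "gibbs \<Lambda> J \<beta> I (\<lambda>s. f s / c) = gibbs \<Lambda> J \<beta> I f / c"
  using gibbs_multc[of \<Lambda> J \<beta> I f "1/c"] by simp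

lemma gibbs_sum: "gibbs \<Lambda> J \<beta> I (\<lambda>s. \<Sum>x\<in>A. f x s) = (\<Sum>x\<in>A. gibbs \<Lambda> J \<beta> I (f x))"
  unfolding gibbs_def by (simp add: sum_distrib_right sum_divide_distrib[symmetric] sum.swap[of _ A])

lemma gibbs_const: "finite \<Lambda> \<Longrightarrow> finite I \<Longrightarrow> gibbs \<Lambda> J \<beta> I (\<lambda>_. c) = c"
proof -
  assume a: "finite \<Lambda>" "finite I"
  have "gibbs \<Lambda> J \<beta> I (\<lambda>_. c) = c * (\<Sum>s\<in>PiE I (\<lambda>_. configs \<Lambda>). (\<Prod>i\<in>I. wt \<Lambda> J \<beta> (s i))) / partition_fn \<Lambda> J \<beta> ^ card I"
    by (simp add: gibbs_wt a sum_distrib_left)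
  also have "\<dots> = c" using Zpow[OF a, of J \<beta>, symmetric] partition_pos[OF a(1), of J \<beta>] by simp
  finally show ?thesis .
qed

lemma gibbs_prod:
  assumes "finite \<Lambda>" "finite I"
  shows "gibbs \<Lambda> J \<beta> I (\<lambda>s. \<Prod>i\<in>I. g i (s i)) = (\<Prod>i\<in>I. om \<Lambda> J \<beta> (g i))"
proof -
  have "(\<Sum>s\<in>PiE I (\<lambda>_. configs \<Lambda>). (\<Prod>i\<in>I. g i (s i)) * (\<Prod>i\<in>I. wt \<Lambda> J \<beta> (s i)))
      = (\<Sum>s\<in>PiE I (\<lambda>_. configs \<Lambda>). \<Prod>i\<in>I. g i (s i) * wt \<Lambda> J \<beta> (s i))"
    by (simp add: prod.distrib)
  also have "\<dots> = (\<Prod>i\<in>I. \<Sum>\<sigma>\<in>configs \<Lambda>. g i \<sigma> * wt \<Lambda> J \<beta> \<sigma>)"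
    by (subst prod_sum_PiE) (auto simp: assms finite_configs)
  finally show ?thesis
    using assms by (simp add: gibbs_wt om_def prod_dividef)
qed

lemma om_const: "finite \<Lambda> \<Longrightarrow> om \<Lambda> J \<beta> (\<lambda>_. c) = c"
  using partition_pos[of \<Lambda> J \<beta>] by (simp add: om_def partition_wt sum_distrib_left[symmetric])

lemma gibbs_single:
  assumes "finite \<Lambda>" "finite I" "l \<in> I"
  shows "gibbs \<Lambda> J \<beta> I (\<lambda>s. B (s l)) = om \<Lambda> J \<beta> B"
proof -
  have "gibbs \<Lambda> J \<beta> I (\<lambda>s. B (s l)) = gibbs \<Lambda> J \<beta> I (\<lambda>s. \<Prod>i\<in>I. (\<lambda>\<sigma>. if i = l then B \<sigma> else 1) (s i))"
    using assms by (intro gibbs_cong) (simp add: prod.delta)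
  also have "\<dots> = (\<Prod>i\<in>I. om \<Lambda> J \<beta> (\<lambda>\<sigma>. if i = l then B \<sigma> else 1))"
    by (rule gibbs_prod[OF assms(1,2)])
  also have "\<dots> = (\<Prod>i\<in>I. if i = l then om \<Lambda> J \<beta> B else 1)"
    using assms by (intro prod.cong) (auto simp: om_const)
  also have "\<dots> = om \<Lambda> J \<beta> B"
    using assms by (simp add: prod.delta)
  finally show ?thesis .
qed

lemma gibbs_bool:
  assumes "finite \<Lambda>"
  shows "gibbs \<Lambda> J \<beta> (UNIV::bool set) (\<lambda>s. A (s True) * B (s False)) = om \<Lambda> J \<beta> A * om \<Lambda> J \<beta> B"
proof -
  have "gibbs \<Lambda> J \<beta> (UNIV::bool set) (\<lambda>s. A (s True) * B (s False)) =
        gibbs \<Lambda> J \<beta> (UNIV::bool set) (\<lambda>s. \<Prod>i\<in>UNIV. (if i then A else B) (s i))"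
    by (intro gibbs_cong) (simp add: UNIV_bool)
  also have "\<dots> = om \<Lambda> J \<beta> A * om \<Lambda> J \<beta> B"
    by (subst gibbs_prod[OF assms]) (auto simp: UNIV_bool)
  finally show ?thesis .
qed


lemma bij_option_split:
  "bij_betw (\<lambda>(t, \<sigma>). case_option \<sigma> t) (PiE (UNIV::'i set) (\<lambda>_. S) \<times> S) (PiE (UNIV::'i option set) (\<lambda>_. S))"
proof (rule bij_betwI[where g="\<lambda>s. (s \<circ> Some, s None)"])
  show "(\<lambda>(t, \<sigma>). case_option \<sigma> t) \<in> PiE UNIV (\<lambda>_. S) \<times> S \<rightarrow> PiE UNIV (\<lambda>_. S)"
    by (auto simp: PiE_def Pi_def split: option.splits)
  show "(\<lambda>s. (s \<circ> Some, s None)) \<in> PiE UNIV (\<lambda>_. S) \<rightarrow> PiE (UNIV::'i set) (\<lambda>_. S) \<times> S"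
    by (auto simp: PiE_def Pi_def)
  show "(\<lambda>s. (s \<circ> Some, s None)) ((\<lambda>(t, \<sigma>). case_option \<sigma> t) x) = x" for x :: "('i \<Rightarrow> 'a) \<times> 'a"
    by (cases x) (auto simp: fun_eq_iff)
  show "(\<lambda>(t, \<sigma>). case_option \<sigma> t) ((\<lambda>s. (s \<circ> Some, s None)) y) = y" for y :: "'i option \<Rightarrow> 'a"
    by (auto simp: fun_eq_iff split: option.splits)
qed

lemma sum_PiE_option:
  "(\<Sum>s\<in>PiE (UNIV::'i option set) (\<lambda>_. S). F s) = (\<Sum>t\<in>PiE (UNIV::'i set) (\<lambda>_. S). \<Sum>\<sigma>\<in>S. F (case_option \<sigma> t))"
proof -
  have "(\<Sum>s\<in>PiE (UNIV::'i option set) (\<lambda>_. S). F s) = (\<Sum>x\<in>PiE (UNIV::'i set) (\<lambda>_. S) \<times> S. F ((\<lambda>(t, \<sigma>). case_option \<sigma> t) x))"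
    by (rule sum.reindex_bij_betw[OF bij_option_split, symmetric])
  also have "\<dots> = (\<Sum>t\<in>PiE (UNIV::'i set) (\<lambda>_. S). \<Sum>\<sigma>\<in>S. F (case_option \<sigma> t))"
    by (simp add: sum.cartesian_product split_def)
  finally show ?thesis .
qed

lemma prod_UNIV_option:
  fixes g :: "'i option \<Rightarrow> real"
  assumes "finite (UNIV::'i set)"
  shows "(\<Prod>u\<in>UNIV. g u) = g None * (\<Prod>i\<in>UNIV. g (Some i))"
proof -
  have "(\<Prod>u\<in>UNIV. g u) = (\<Prod>u\<in>insert None (range Some). g u)" by (simp add: UNIV_option_conv[symmetric])
  also have "\<dots> = g None * (\<Prod>u\<in>range Some. g u)" using assms by (subst prod.insert) auto
  also have "(\<Prod>u\<in>range Some. g u) = (\<Prod>i\<in>UNIV. g (Some i))" by (subst prod.reindex) auto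
  finally show ?thesis .
qed

lemma card_UNIV_option':
  assumes "finite (UNIV::'i set)"
  shows "card (UNIV::'i option set) = Suc (card (UNIV::'i set))"
proof -
  have "card (UNIV::'i option set) = card (insert None (range (Some :: 'i \<Rightarrow> _)))" by (simp add: UNIV_option_conv[symmetric])
  also have "\<dots> = Suc (card (range (Some :: 'i \<Rightarrow> _)))" using assms by (subst card_insert_disjoint) auto
  also have "card (range (Some :: 'i \<Rightarrow> _)) = card (UNIV::'i set)" by (rule card_image) auto
  finally show ?thesis .
qed

lemma gibbs_option:
  fixes A :: "('i \<Rightarrow> 's \<Rightarrow> real) \<Rightarrow> real"
  assumes fin: "finite \<Lambda>" "finite (UNIV::'i set)"
  shows "gibbs \<Lambda> J \<beta> (UNIV::'i option set) (\<lambda>s. A (s \<circ> Some) * B (s None))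
       = gibbs \<Lambda> J \<beta> (UNIV::'i set) A * om \<Lambda> J \<beta> B"
proof -
  have finO: "finite (UNIV::'i option set)" using fin(2) by (simp add: UNIV_option_conv)
  let ?S = "configs \<Lambda>" and ?w = "wt \<Lambda> J \<beta>" and ?Z = "partition_fn \<Lambda> J \<beta>"
  have "(\<Sum>s\<in>PiE (UNIV::'i option set) (\<lambda>_. ?S). A (s \<circ> Some) * B (s None) * (\<Prod>u\<in>UNIV. ?w (s u)))
     = (\<Sum>t\<in>PiE (UNIV::'i set) (\<lambda>_. ?S). \<Sum>\<sigma>\<in>?S. (A t * (\<Prod>i\<in>UNIV. ?w (t i))) * (B \<sigma> * ?w \<sigma>))"
    unfolding sum_PiE_option
    by (intro sum.cong refl) (simp add: prod_UNIV_option[OF fin(2)] comp_def mult_ac)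
  also have "\<dots> = (\<Sum>t\<in>PiE (UNIV::'i set) (\<lambda>_. ?S). A t * (\<Prod>i\<in>UNIV. ?w (t i))) * (\<Sum>\<sigma>\<in>?S. B \<sigma> * ?w \<sigma>)"
    by (simp add: sum_product)
  finally have num: "(\<Sum>s\<in>PiE (UNIV::'i option set) (\<lambda>_. ?S). A (s \<circ> Some) * B (s None) * (\<Prod>u\<in>UNIV. ?w (s u)))
     = (\<Sum>t\<in>PiE (UNIV::'i set) (\<lambda>_. ?S). A t * (\<Prod>i\<in>UNIV. ?w (t i))) * (\<Sum>\<sigma>\<in>?S. B \<sigma> * ?w \<sigma>)" .
  show ?thesis
    unfolding gibbs_wt[OF finO] gibbs_wt[OF fin(2)] num om_def card_UNIV_option'[OF fin(2)]
    by (simp add: field_simps)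
qed


lemma ratio_deriv:
  fixes f b c :: "'a \<Rightarrow> real"
  assumes T: "finite T" "T \<noteq> {}" and c: "\<And>s. s \<in> T \<Longrightarrow> 0 < c s"
  shows "((\<lambda>x. (\<Sum>s\<in>T. f s * (c s * exp (x * b s))) / (\<Sum>s\<in>T. c s * exp (x * b s))) has_real_derivative
     ((\<Sum>s\<in>T. (f s * b s) * (c s * exp (x * b s))) / (\<Sum>s\<in>T. c s * exp (x * b s))
      - (\<Sum>s\<in>T. f s * (c s * exp (x * b s))) / (\<Sum>s\<in>T. c s * exp (x * b s))
        * ((\<Sum>s\<in>T. b s * (c s * exp (x * b s))) / (\<Sum>s\<in>T. c s * exp (x * b s))))) (at x)"
proof -
  let ?N = "\<lambda>x. (\<Sum>s\<in>T. f s * (c s * exp (x * b s)))"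
  let ?D = "\<lambda>x. (\<Sum>s\<in>T. c s * exp (x * b s))"
  have Dpos: "0 < ?D x" using T c by (intro sum_pos) auto
  have dN: "(?N has_real_derivative (\<Sum>s\<in>T. (f s * b s) * (c s * exp (x * b s)))) (at x)"
    by (auto intro!: derivative_eq_intros sum.cong simp: mult_ac)
  have dD: "(?D has_real_derivative (\<Sum>s\<in>T. b s * (c s * exp (x * b s)))) (at x)"
    by (auto intro!: derivative_eq_intros sum.cong simp: mult_ac)
  have alg: "\<And>a n d D :: real. D \<noteq> 0 \<Longrightarrow> (a * D - n * d) / (D * D) = a / D - n / D * (d / D)"
    by (simp add: field_simps)
  have ne: "?D x \<noteq> 0" using Dpos by simp
  show ?thesis
    using DERIV_cong[OF DERIV_divide[OF dN dD ne] alg[OF ne]] .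
qed

definition gb :: "('s set \<Rightarrow> real) \<Rightarrow> real \<Rightarrow> 's set \<Rightarrow> 'i set \<Rightarrow> ('i \<Rightarrow> 's \<Rightarrow> real) \<Rightarrow> real" where
  "gb \<Delta> \<beta> Y I s = \<beta> * \<Delta> Y * (\<Sum>i\<in>I. spin_prod (s i) Y)"

lemma ham_slice:
  assumes "finite \<Lambda>" "Y \<in> Pow \<Lambda>"
  shows "hamiltonian \<Lambda> (coupling \<Delta> (z(Y:=t))) \<sigma> =
         hamiltonian \<Lambda> (coupling \<Delta> (z(Y:=0))) \<sigma> - t * \<Delta> Y * spin_prod \<sigma> Y"
proof -
  have fin: "finite (Pow \<Lambda>)" using assms by simp
  define R where "R = (\<Sum>X\<in>Pow \<Lambda> - {Y}. coupling \<Delta> (z(Y:=0)) X * spin_prod \<sigma> X)"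
  have e: "(\<Sum>X\<in>Pow \<Lambda>. coupling \<Delta> (z(Y:=u)) X * spin_prod \<sigma> X) = u * \<Delta> Y * spin_prod \<sigma> Y + R" for u
  proof -
    have "(\<Sum>X\<in>Pow \<Lambda>. coupling \<Delta> (z(Y:=u)) X * spin_prod \<sigma> X) =
        coupling \<Delta> (z(Y:=u)) Y * spin_prod \<sigma> Y + (\<Sum>X\<in>Pow \<Lambda> - {Y}. coupling \<Delta> (z(Y:=u)) X * spin_prod \<sigma> X)"
      by (rule sum.remove[OF fin assms(2)])
    also have "(\<Sum>X\<in>Pow \<Lambda> - {Y}. coupling \<Delta> (z(Y:=u)) X * spin_prod \<sigma> X) = R"
      unfolding R_def by (intro sum.cong) (auto simp: coupling_def)
    finally show ?thesis by (simp add: coupling_def)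
  qed
  have h: "hamiltonian \<Lambda> (coupling \<Delta> (z(Y:=u))) \<sigma> = - (u * \<Delta> Y * spin_prod \<sigma> Y + R)" for u
    unfolding hamiltonian_def e by (rule refl)
  show ?thesis
    unfolding h[of t] h[of 0] by (simp add: algebra_simps)
qed

lemma wt_slice:
  assumes "finite \<Lambda>" "Y \<in> Pow \<Lambda>"
  shows "wt \<Lambda> (coupling \<Delta> (z(Y:=t))) \<beta> \<sigma> =
         wt \<Lambda> (coupling \<Delta> (z(Y:=0))) \<beta> \<sigma> * exp (t * (\<beta> * \<Delta> Y * spin_prod \<sigma> Y))"
  unfolding wt_def ham_slice[OF assms, where t=t] by (simp add: exp_add[symmetric] algebra_simps)

lemma prod_wt_slice:
  assumes "finite \<Lambda>" "Y \<in> Pow \<Lambda>" "finite I"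
  shows "(\<Prod>i\<in>I. wt \<Lambda> (coupling \<Delta> (z(Y:=t))) \<beta> (s i)) =
         (\<Prod>i\<in>I. wt \<Lambda> (coupling \<Delta> (z(Y:=0))) \<beta> (s i)) * exp (t * gb \<Delta> \<beta> Y I s)"
  unfolding wt_slice[OF assms(1,2), where t=t] prod.distrib gb_def
  using assms(3) by (simp add: exp_sum[symmetric] sum_distrib_left)

lemma gibbs_slice:
  assumes "finite \<Lambda>" "Y \<in> Pow \<Lambda>" "finite I"
  shows "gibbs \<Lambda> (coupling \<Delta> (z(Y:=t))) \<beta> I f =
    (\<Sum>s\<in>PiE I (\<lambda>_. configs \<Lambda>). f s * ((\<Prod>i\<in>I. wt \<Lambda> (coupling \<Delta> (z(Y:=0))) \<beta> (s i)) * exp (t * gb \<Delta> \<beta> Y I s)))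
   / (\<Sum>s\<in>PiE I (\<lambda>_. configs \<Lambda>). (\<Prod>i\<in>I. wt \<Lambda> (coupling \<Delta> (z(Y:=0))) \<beta> (s i)) * exp (t * gb \<Delta> \<beta> Y I s))"
  unfolding gibbs_wt[OF assms(3)] Zpow[OF assms(1,3)] prod_wt_slice[OF assms, where t=t] ..

lemma gibbs_deriv:
  assumes "finite \<Lambda>" "Y \<in> Pow \<Lambda>" "finite I"
  shows "((\<lambda>t. gibbs \<Lambda> (coupling \<Delta> (z(Y:=t))) \<beta> I f) has_real_derivative
     (gibbs \<Lambda> (coupling \<Delta> (z(Y:=x))) \<beta> I (\<lambda>s. f s * gb \<Delta> \<beta> Y I s)
      - gibbs \<Lambda> (coupling \<Delta> (z(Y:=x))) \<beta> I f * gibbs \<Lambda> (coupling \<Delta> (z(Y:=x))) \<beta> I (gb \<Delta> \<beta> Y I))) (at x)"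
  unfolding gibbs_slice[OF assms]
  by (rule ratio_deriv) (auto simp: finite_PiE_configs assms PiE_eq_empty_iff configs_ne wt_pos intro!: prod_pos)


definition bm :: "'a measure \<Rightarrow> ('a \<Rightarrow> real) \<Rightarrow> bool" where
  "bm M F \<longleftrightarrow> F \<in> borel_measurable M \<and> (\<exists>C. \<forall>z. \<bar>F z\<bar> \<le> C)"

lemma bm_const[simp]: "bm M (\<lambda>z. c)"
  unfolding bm_def by auto

lemma bm_add[simp]: assumes "bm M F" "bm M G" shows "bm M (\<lambda>z. F z + G z)"
proof -
  obtain C1 C2 where c: "\<And>z. \<bar>F z\<bar> \<le> C1" "\<And>z. \<bar>G z\<bar> \<le> C2" using assms unfolding bm_def by blast
  have "\<bar>F z + G z\<bar> \<le> C1 + C2" for z using c[of z] by linarith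
  then show ?thesis using assms unfolding bm_def by auto
qed

lemma bm_diff[simp]: assumes "bm M F" "bm M G" shows "bm M (\<lambda>z. F z - G z)"
proof -
  obtain C1 C2 where c: "\<And>z. \<bar>F z\<bar> \<le> C1" "\<And>z. \<bar>G z\<bar> \<le> C2" using assms unfolding bm_def by blast
  have "\<bar>F z - G z\<bar> \<le> C1 + C2" for z using c[of z] by linarith
  then show ?thesis using assms unfolding bm_def by auto
qed

lemma bm_mult[simp]: assumes "bm M F" "bm M G" shows "bm M (\<lambda>z. F z * G z)"
proof -
  obtain C1 C2 where c: "\<And>z. \<bar>F z\<bar> \<le> C1" "\<And>z. \<bar>G z\<bar> \<le> C2" using assms unfolding bm_def by blast
  have "\<bar>F z * G z\<bar> \<le> C1 * C2" for z
    unfolding abs_mult using c[of z] by (intro mult_mono) auto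
  then show ?thesis using assms unfolding bm_def by auto
qed

lemma bm_minus[simp]: assumes "bm M F" shows "bm M (\<lambda>z. - F z)"
  using bm_diff[OF bm_const assms, of 0] by simp

lemma bm_sum[simp]: assumes "\<And>x. x \<in> A \<Longrightarrow> bm M (F x)" shows "bm M (\<lambda>z. \<Sum>x\<in>A. F x z)"
proof (cases "finite A")
  case True
  then show ?thesis using assms
    by (induction A rule: finite_induct) (auto simp: bm_add)
next
  case False
  then show ?thesis by simp
qed

lemma bm_integrable: assumes "finite_measure M" "bm M F" shows "integrable M F"
proof -
  obtain C where "F \<in> borel_measurable M" "\<And>z. \<bar>F z\<bar> \<le> C" using assms(2) unfolding bm_def by blast
  then show ?thesis by (intro finite_measure.integrable_const_bound[OF assms(1), where B=C]) auto
qed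

lemma bm_measurable: "bm M F \<Longrightarrow> F \<in> borel_measurable M"
  unfolding bm_def by auto

abbreviation GM where "GM \<Lambda> \<equiv> PiM (Pow \<Lambda>) (\<lambda>_. std_gauss)"

lemma finite_GM: "finite_measure (GM \<Lambda>)"
  by (rule prob_space.finite_measure, rule prob_space_PiM) (simp add: prob_std_gauss)

lemma gibbs_bound:
  assumes "finite \<Lambda>" "finite I"
  shows "\<bar>gibbs \<Lambda> J \<beta> I f\<bar> \<le> (\<Sum>t\<in>PiE I (\<lambda>_. configs \<Lambda>). \<bar>f t\<bar>)"
proof -
  let ?T = "PiE I (\<lambda>_. configs \<Lambda>)"
  let ?e = "\<lambda>s. \<Prod>i\<in>I. wt \<Lambda> J \<beta> (s i)"
  let ?C = "\<Sum>t\<in>?T. \<bar>f t\<bar>"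
  have fT: "finite ?T" using assms by (simp add: finite_PiE_configs)
  have epos: "0 < ?e s" for s by (intro prod_pos) (simp add: wt_pos)
  have Zp: "0 < (\<Sum>s\<in>?T. ?e s)"
    using fT epos by (intro sum_pos) (auto simp: PiE_eq_empty_iff configs_ne)
  have "\<bar>\<Sum>s\<in>?T. f s * ?e s\<bar> \<le> (\<Sum>s\<in>?T. \<bar>f s * ?e s\<bar>)" by (rule sum_abs)
  also have "\<dots> \<le> (\<Sum>s\<in>?T. ?C * ?e s)"
  proof (intro sum_mono)
    fix s assume "s \<in> ?T"
    then have "\<bar>f s\<bar> \<le> ?C" using fT by (intro member_le_sum) auto
    then show "\<bar>f s * ?e s\<bar> \<le> ?C * ?e s"
      using epos[of s] by (simp add: abs_mult mult_right_mono)
  qed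
  also have "\<dots> = ?C * (\<Sum>s\<in>?T. ?e s)" by (simp add: sum_distrib_left)
  finally have "\<bar>\<Sum>s\<in>?T. f s * ?e s\<bar> / (\<Sum>s\<in>?T. ?e s) \<le> ?C"
    using Zp by (simp add: divide_le_eq)
  then show ?thesis
    unfolding gibbs_wt[OF assms(2)] Zpow[OF assms] using Zp by (simp add: abs_divide)
qed

lemma gibbs_meas:
  assumes "finite \<Lambda>"
  shows "(\<lambda>z. gibbs \<Lambda> (coupling \<Delta> z) \<beta> I f) \<in> borel_measurable (GM \<Lambda>)"
  unfolding gibbs_def partition_fn_def hamiltonian_def coupling_def
  by measurable

lemma bm_gibbs[simp]:
  assumes "finite \<Lambda>" "finite I"
  shows "bm (GM \<Lambda>) (\<lambda>z. gibbs \<Lambda> (coupling \<Delta> z) \<beta> I f)"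
  unfolding bm_def using gibbs_meas[OF assms(1)] gibbs_bound[OF assms] by blast

lemma om_as_gibbs: "finite \<Lambda> \<Longrightarrow> om \<Lambda> J \<beta> g = gibbs \<Lambda> J \<beta> (UNIV::unit set) (\<lambda>s. g (s ()))"
  by (rule gibbs_single[symmetric]) auto

lemma bm_om[simp]:
  assumes "finite \<Lambda>"
  shows "bm (GM \<Lambda>) (\<lambda>z. om \<Lambda> (coupling \<Delta> z) \<beta> g)"
  unfolding om_as_gibbs[OF assms] using bm_gibbs[OF assms, of "UNIV::unit set"] by simp


lemma om_cong: "(\<And>\<sigma>. \<sigma> \<in> configs \<Lambda> \<Longrightarrow> g \<sigma> = h \<sigma>) \<Longrightarrow> om \<Lambda> J \<beta> g = om \<Lambda> J \<beta> h"
  unfolding om_def by (intro arg_cong2[where f="(/)"] sum.cong) auto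

lemma sp_sq:
  assumes "finite \<Lambda>" "X \<subseteq> \<Lambda>" "\<sigma> \<in> configs \<Lambda>"
  shows "spin_prod \<sigma> X * spin_prod \<sigma> X = (if X = {} then 0 else 1)"
proof (cases "X = {}")
  case False
  have fX: "finite X" using assms finite_subset by blast
  have "spin_prod \<sigma> X * spin_prod \<sigma> X = (\<Prod>i\<in>X. \<sigma> i * \<sigma> i)"
    using False by (simp add: spin_prod_def prod.distrib)
  also have "\<dots> = (\<Prod>i\<in>X. 1)"
  proof (intro prod.cong refl)
    fix i assume "i \<in> X"
    then have "\<sigma> i \<in> {-1, 1}" using assms(2,3) by (auto simp: configs_def PiE_def Pi_def)
    then show "\<sigma> i * \<sigma> i = 1" by auto
  qed
  finally show ?thesis using False by simp
qed (simp add: spin_prod_def)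

lemma om_sq:
  assumes "finite \<Lambda>" "X \<in> Pow \<Lambda>"
  shows "om \<Lambda> J \<beta> (\<lambda>\<sigma>. spin_prod \<sigma> X * spin_prod \<sigma> X) = (if X = {} then 0 else 1)"
proof -
  have "om \<Lambda> J \<beta> (\<lambda>\<sigma>. spin_prod \<sigma> X * spin_prod \<sigma> X) = om \<Lambda> J \<beta> (\<lambda>\<sigma>. if X = {} then 0 else 1)"
    using assms by (intro om_cong sp_sq) auto
  then show ?thesis using om_const[OF assms(1)] by simp
qed

lemma gibbs_deriv2:
  assumes "finite \<Lambda>" "Y \<in> Pow \<Lambda>" "finite I"
  shows "((\<lambda>t. gibbs \<Lambda> (coupling \<Delta> (z(Y:=t))) \<beta> I f) has_real_derivative
     \<beta> * \<Delta> Y * ((\<Sum>i\<in>I. gibbs \<Lambda> (coupling \<Delta> (z(Y:=x))) \<beta> I (\<lambda>s. f s * spin_prod (s i) Y))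
        - real (card I) * gibbs \<Lambda> (coupling \<Delta> (z(Y:=x))) \<beta> I f
            * om \<Lambda> (coupling \<Delta> (z(Y:=x))) \<beta> (\<lambda>\<sigma>. spin_prod \<sigma> Y))) (at x)"
proof -
  let ?J = "coupling \<Delta> (z(Y:=x))"
  have e1: "gibbs \<Lambda> ?J \<beta> I (\<lambda>s. f s * gb \<Delta> \<beta> Y I s) =
      \<beta> * \<Delta> Y * (\<Sum>i\<in>I. gibbs \<Lambda> ?J \<beta> I (\<lambda>s. f s * spin_prod (s i) Y))"
  proof -
    have "(\<lambda>s. f s * gb \<Delta> \<beta> Y I s) = (\<lambda>s. \<beta> * \<Delta> Y * (\<Sum>i\<in>I. f s * spin_prod (s i) Y))"
      by (simp add: gb_def sum_distrib_left mult_ac fun_eq_iff)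
    then show ?thesis by (simp add: gibbs_cmult gibbs_sum)
  qed
  have e2: "gibbs \<Lambda> ?J \<beta> I (gb \<Delta> \<beta> Y I) =
      \<beta> * \<Delta> Y * (real (card I) * om \<Lambda> ?J \<beta> (\<lambda>\<sigma>. spin_prod \<sigma> Y))"
  proof -
    have "gibbs \<Lambda> ?J \<beta> I (gb \<Delta> \<beta> Y I) = \<beta> * \<Delta> Y * (\<Sum>i\<in>I. gibbs \<Lambda> ?J \<beta> I (\<lambda>s. spin_prod (s i) Y))"
      unfolding gb_def[abs_def] by (simp add: gibbs_cmult gibbs_sum)
    also have "(\<Sum>i\<in>I. gibbs \<Lambda> ?J \<beta> I (\<lambda>s. spin_prod (s i) Y)) = (\<Sum>i\<in>I. om \<Lambda> ?J \<beta> (\<lambda>\<sigma>. spin_prod \<sigma> Y))"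
      using assms by (intro sum.cong refl gibbs_single) auto
    finally show ?thesis by (simp add: fun_upd_def)
  qed
  show ?thesis
    using gibbs_deriv[OF assms, of \<Delta> z \<beta> f x] unfolding e1 e2
    by (rule DERIV_cong) (simp add: algebra_simps)
qed

lemma om_deriv:
  assumes "finite \<Lambda>" "Y \<in> Pow \<Lambda>"
  shows "((\<lambda>t. om \<Lambda> (coupling \<Delta> (z(Y:=t))) \<beta> g) has_real_derivative
     \<beta> * \<Delta> Y * (om \<Lambda> (coupling \<Delta> (z(Y:=x))) \<beta> (\<lambda>\<sigma>. g \<sigma> * spin_prod \<sigma> Y)
        - om \<Lambda> (coupling \<Delta> (z(Y:=x))) \<beta> g * om \<Lambda> (coupling \<Delta> (z(Y:=x))) \<beta> (\<lambda>\<sigma>. spin_prod \<sigma> Y))) (at x)"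
proof -
  have "(\<Sum>i\<in>(UNIV::unit set). gibbs \<Lambda> (coupling \<Delta> (z(Y:=x))) \<beta> UNIV (\<lambda>s. g (s ()) * spin_prod (s i) Y))
      = om \<Lambda> (coupling \<Delta> (z(Y:=x))) \<beta> (\<lambda>\<sigma>. g \<sigma> * spin_prod \<sigma> Y)"
    using om_as_gibbs[OF assms(1)] by (simp add: UNIV_unit)
  then show ?thesis
    using gibbs_deriv2[OF assms, of "UNIV::unit set" \<Delta> z \<beta> "\<lambda>s. g (s ())" x]
    unfolding om_as_gibbs[OF assms(1)] by (simp add: UNIV_unit)
qed

lemma gibbs_cont:
  assumes "finite \<Lambda>" "Y \<in> Pow \<Lambda>" "finite I"
  shows "isCont (\<lambda>t. gibbs \<Lambda> (coupling \<Delta> (z(Y:=t))) \<beta> I f) x"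
  using gibbs_deriv[OF assms] by (rule DERIV_isCont)

lemma om_cont:
  assumes "finite \<Lambda>" "Y \<in> Pow \<Lambda>"
  shows "isCont (\<lambda>t. om \<Lambda> (coupling \<Delta> (z(Y:=t))) \<beta> g) x"
  using om_deriv[OF assms] by (rule DERIV_isCont)

lemma stein_bm:
  fixes F D :: "('a \<Rightarrow> real) \<Rightarrow> real"
  assumes P: "finite P" "Y \<in> P"
    and F: "bm (PiM P (\<lambda>_. std_gauss)) F" and D: "bm (PiM P (\<lambda>_. std_gauss)) D"
    and der: "\<And>z x. ((\<lambda>t. F (z(Y:=t))) has_real_derivative D (z(Y:=x))) (at x)"
    and cont: "\<And>z x. isCont (\<lambda>t. D (z(Y:=t))) x"
  shows "(\<integral>z. z Y * F z \<partial>PiM P (\<lambda>_. std_gauss)) = (\<integral>z. D z \<partial>PiM P (\<lambda>_. std_gauss))"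
proof -
  obtain C1 C2 where c: "\<And>z. \<bar>F z\<bar> \<le> C1" "\<And>z. \<bar>D z\<bar> \<le> C2" using F D unfolding bm_def by blast
  show ?thesis
    by (rule stein_PiM[OF P bm_measurable[OF F] bm_measurable[OF D], where C="max C1 C2"])
       (use c der cont in \<open>auto intro: order_trans[OF _ max.cobounded1] order_trans[OF _ max.cobounded2]\<close>)
qed


lemma stein_m:
  assumes L: "finite \<Lambda>" and X: "X \<in> Pow \<Lambda>"
  shows "(\<integral>z. z X * om \<Lambda> (coupling \<Delta> z) \<beta> (\<lambda>\<sigma>. spin_prod \<sigma> X) \<partial>GM \<Lambda>) =
    (\<integral>z. \<beta> * \<Delta> X * ((if X = {} then 0 else 1) - om \<Lambda> (coupling \<Delta> z) \<beta> (\<lambda>\<sigma>. spin_prod \<sigma> X) * om \<Lambda> (coupling \<Delta> z) \<beta> (\<lambda>\<sigma>. spin_prod \<sigma> X)) \<partial>GM \<Lambda>)"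
proof -
  have fP: "finite (Pow \<Lambda>)" using L by simp
  have "(\<integral>z. z X * om \<Lambda> (coupling \<Delta> z) \<beta> (\<lambda>\<sigma>. spin_prod \<sigma> X) \<partial>GM \<Lambda>) =
    (\<integral>z. \<beta> * \<Delta> X * (om \<Lambda> (coupling \<Delta> z) \<beta> (\<lambda>\<sigma>. spin_prod \<sigma> X * spin_prod \<sigma> X) - om \<Lambda> (coupling \<Delta> z) \<beta> (\<lambda>\<sigma>. spin_prod \<sigma> X) * om \<Lambda> (coupling \<Delta> z) \<beta> (\<lambda>\<sigma>. spin_prod \<sigma> X)) \<partial>GM \<Lambda>)"
  proof (rule stein_bm[OF fP X])
    show "bm (GM \<Lambda>) (\<lambda>z. om \<Lambda> (coupling \<Delta> z) \<beta> (\<lambda>\<sigma>. spin_prod \<sigma> X))" using L by simp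
    show "bm (GM \<Lambda>) (\<lambda>z. \<beta> * \<Delta> X * (om \<Lambda> (coupling \<Delta> z) \<beta> (\<lambda>\<sigma>. spin_prod \<sigma> X * spin_prod \<sigma> X) - om \<Lambda> (coupling \<Delta> z) \<beta> (\<lambda>\<sigma>. spin_prod \<sigma> X) * om \<Lambda> (coupling \<Delta> z) \<beta> (\<lambda>\<sigma>. spin_prod \<sigma> X)))"
      using L by simp
    show "((\<lambda>t. om \<Lambda> (coupling \<Delta> (z(X:=t))) \<beta> (\<lambda>\<sigma>. spin_prod \<sigma> X)) has_real_derivative
      \<beta> * \<Delta> X * (om \<Lambda> (coupling \<Delta> (z(X:=x))) \<beta> (\<lambda>\<sigma>. spin_prod \<sigma> X * spin_prod \<sigma> X) - om \<Lambda> (coupling \<Delta> (z(X:=x))) \<beta> (\<lambda>\<sigma>. spin_prod \<sigma> X) * om \<Lambda> (coupling \<Delta> (z(X:=x))) \<beta> (\<lambda>\<sigma>. spin_prod \<sigma> X))) (at x)" for z x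
      using om_deriv[OF L X, of \<Delta> z \<beta> "\<lambda>\<sigma>. spin_prod \<sigma> X" x] by simp
    show "isCont (\<lambda>t. \<beta> * \<Delta> X * (om \<Lambda> (coupling \<Delta> (z(X:=t))) \<beta> (\<lambda>\<sigma>. spin_prod \<sigma> X * spin_prod \<sigma> X) - om \<Lambda> (coupling \<Delta> (z(X:=t))) \<beta> (\<lambda>\<sigma>. spin_prod \<sigma> X) * om \<Lambda> (coupling \<Delta> (z(X:=t))) \<beta> (\<lambda>\<sigma>. spin_prod \<sigma> X))) x" for z x
      by (intro continuous_intros om_cont L X)
  qed
  also have "\<dots> = (\<integral>z. \<beta> * \<Delta> X * ((if X = {} then 0 else 1) - om \<Lambda> (coupling \<Delta> z) \<beta> (\<lambda>\<sigma>. spin_prod \<sigma> X) * om \<Lambda> (coupling \<Delta> z) \<beta> (\<lambda>\<sigma>. spin_prod \<sigma> X)) \<partial>GM \<Lambda>)"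
    by (simp only: om_sq[OF L X])
  finally show ?thesis .
qed

lemma stein_mg:
  assumes L: "finite \<Lambda>" and X: "X \<in> Pow \<Lambda>" and I: "finite I"
  shows "(\<integral>z. z X * (om \<Lambda> (coupling \<Delta> z) \<beta> (\<lambda>\<sigma>. spin_prod \<sigma> X) * gibbs \<Lambda> (coupling \<Delta> z) \<beta> I f) \<partial>GM \<Lambda>) =
    (\<integral>z. \<beta> * \<Delta> X * (((if X = {} then 0 else 1) - om \<Lambda> (coupling \<Delta> z) \<beta> (\<lambda>\<sigma>. spin_prod \<sigma> X) * om \<Lambda> (coupling \<Delta> z) \<beta> (\<lambda>\<sigma>. spin_prod \<sigma> X)) * gibbs \<Lambda> (coupling \<Delta> z) \<beta> I f
       + om \<Lambda> (coupling \<Delta> z) \<beta> (\<lambda>\<sigma>. spin_prod \<sigma> X) * ((\<Sum>i\<in>I. gibbs \<Lambda> (coupling \<Delta> z) \<beta> I (\<lambda>s. f s * spin_prod (s i) X))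
           - real (card I) * gibbs \<Lambda> (coupling \<Delta> z) \<beta> I f * om \<Lambda> (coupling \<Delta> z) \<beta> (\<lambda>\<sigma>. spin_prod \<sigma> X))) \<partial>GM \<Lambda>)"
proof -
  have fP: "finite (Pow \<Lambda>)" using L by simp
  let ?m = "\<lambda>z. om \<Lambda> (coupling \<Delta> z) \<beta> (\<lambda>\<sigma>. spin_prod \<sigma> X)"
  let ?q = "\<lambda>z. om \<Lambda> (coupling \<Delta> z) \<beta> (\<lambda>\<sigma>. spin_prod \<sigma> X * spin_prod \<sigma> X)"
  let ?g = "\<lambda>z. gibbs \<Lambda> (coupling \<Delta> z) \<beta> I f"
  let ?gs = "\<lambda>z. (\<Sum>i\<in>I. gibbs \<Lambda> (coupling \<Delta> z) \<beta> I (\<lambda>s. f s * spin_prod (s i) X))"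
  let ?D = "\<lambda>z. \<beta> * \<Delta> X * ((?q z - ?m z * ?m z) * ?g z + ?m z * (?gs z - real (card I) * ?g z * ?m z))"
  have "(\<integral>z. z X * (?m z * ?g z) \<partial>GM \<Lambda>) = (\<integral>z. ?D z \<partial>GM \<Lambda>)"
  proof (rule stein_bm[OF fP X])
    show "bm (GM \<Lambda>) (\<lambda>z. ?m z * ?g z)" using L I by simp
    show "bm (GM \<Lambda>) ?D" using L I by simp
    show "((\<lambda>t. ?m (z(X:=t)) * ?g (z(X:=t))) has_real_derivative ?D (z(X:=x))) (at x)" for z x
      using DERIV_mult[OF om_deriv[OF L X, of \<Delta> z \<beta> "\<lambda>\<sigma>. spin_prod \<sigma> X" x] gibbs_deriv2[OF L X I, of \<Delta> z \<beta> f x]]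
      by (rule DERIV_cong) (simp add: algebra_simps)
    show "isCont (\<lambda>t. ?D (z(X:=t))) x" for z x
      by (intro continuous_intros om_cont gibbs_cont L X I)
  qed
  also have "\<dots> = (\<integral>z. \<beta> * \<Delta> X * (((if X = {} then 0 else 1) - ?m z * ?m z) * ?g z + ?m z * (?gs z - real (card I) * ?g z * ?m z)) \<partial>GM \<Lambda>)"
    by (simp only: om_sq[OF L X])
  finally show ?thesis .
qed


lemma finite_lattice_box: "finite (lattice_box a b)"
proof -
  have "lattice_box a b \<subseteq> (\<lambda>f. \<chi> i. f i) ` PiE UNIV (\<lambda>i. {a$i..b$i})"
  proof
    fix x assume "x \<in> lattice_box a b"
    then have "(\<lambda>i. x$i) \<in> PiE UNIV (\<lambda>i. {a$i..b$i})" by (auto simp: lattice_box_def)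
    moreover have "x = (\<chi> i. x$i)" by simp
    ultimately show "x \<in> (\<lambda>f. \<chi> i. f i) ` PiE UNIV (\<lambda>i. {a$i..b$i})" by blast
  qed
  moreover have "finite (PiE (UNIV::'a set) (\<lambda>i. {a$i..b$i}))" by (rule finite_PiE) auto
  ultimately show ?thesis using finite_subset by blast
qed

lemma om_sum: "om \<Lambda> J \<beta> (\<lambda>\<sigma>. \<Sum>x\<in>A. f x \<sigma>) = (\<Sum>x\<in>A. om \<Lambda> J \<beta> (f x))"
  unfolding om_def by (simp add: sum_distrib_right sum_divide_distrib[symmetric] sum.swap[of _ A])

lemma om_cmult: "om \<Lambda> J \<beta> (\<lambda>\<sigma>. a * f \<sigma>) = a * om \<Lambda> J \<beta> f"
  unfolding om_def by (simp add: sum_distrib_left mult_ac)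

lemma om_h:
  "om \<Lambda> (coupling \<Delta> z) \<beta> (h_energy \<Lambda> (coupling \<Delta> z)) =
     - (1 / real (card \<Lambda>)) * (\<Sum>X\<in>Pow \<Lambda>. \<Delta> X * (z X * om \<Lambda> (coupling \<Delta> z) \<beta> (\<lambda>\<sigma>. spin_prod \<sigma> X)))"
proof -
  have "h_energy \<Lambda> (coupling \<Delta> z) = (\<lambda>\<sigma>. (- (1 / real (card \<Lambda>))) * (\<Sum>X\<in>Pow \<Lambda>. (\<Delta> X * z X) * spin_prod \<sigma> X))"
    by (simp add: fun_eq_iff h_energy_def hamiltonian_def coupling_def)
  then have "om \<Lambda> (coupling \<Delta> z) \<beta> (h_energy \<Lambda> (coupling \<Delta> z)) =
     (- (1 / real (card \<Lambda>))) * om \<Lambda> (coupling \<Delta> z) \<beta> (\<lambda>\<sigma>. \<Sum>X\<in>Pow \<Lambda>. (\<Delta> X * z X) * spin_prod \<sigma> X)"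
    by (simp only: om_cmult)
  also have "\<dots> = (- (1 / real (card \<Lambda>))) * (\<Sum>X\<in>Pow \<Lambda>. om \<Lambda> (coupling \<Delta> z) \<beta> (\<lambda>\<sigma>. (\<Delta> X * z X) * spin_prod \<sigma> X))"
    by (simp only: om_sum)
  also have "\<dots> = (- (1 / real (card \<Lambda>))) * (\<Sum>X\<in>Pow \<Lambda>. \<Delta> X * (z X * om \<Lambda> (coupling \<Delta> z) \<beta> (\<lambda>\<sigma>. spin_prod \<sigma> X)))"
    by (simp only: om_cmult mult.assoc)
  finally show ?thesis .
qed

lemma integrable_coord_bm:
  assumes "finite \<Lambda>" "X \<in> Pow \<Lambda>" "bm (GM \<Lambda>) F"
  shows "integrable (GM \<Lambda>) (\<lambda>z. z X * F z)"
proof -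
  obtain C where "F \<in> borel_measurable (GM \<Lambda>)" "\<And>z. \<bar>F z\<bar> \<le> C" using assms(3) unfolding bm_def by blast
  then show ?thesis using assms(1,2) by (intro integrable_coord_mult[where C=C]) auto
qed


lemma cov_expand: "cov \<Lambda> \<Delta> a b' = (\<Sum>X\<in>Pow \<Lambda>. (1 / real (card \<Lambda>) * (\<Delta> X)\<^sup>2) * (spin_prod a X * spin_prod b' X))"
  unfolding cov_def by (simp add: sum_distrib_left mult_ac)

lemma P2:
  assumes L: "finite \<Lambda>"
  shows "gibbs \<Lambda> J \<beta> (UNIV::'r::finite option set) (\<lambda>s. G' (s \<circ> Some) * cov \<Lambda> \<Delta> (s (Some k)) (s None)) =
    (1 / real (card \<Lambda>)) * (\<Sum>X\<in>Pow \<Lambda>. (\<Delta> X)\<^sup>2 * (gibbs \<Lambda> J \<beta> UNIV (\<lambda>t. G' t * spin_prod (t k) X) * om \<Lambda> J \<beta> (\<lambda>\<sigma>. spin_prod \<sigma> X)))"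
proof -
  have fU: "finite (UNIV::'r set)" by simp
  have fU2: "finite (UNIV::'r option set)" by simp
  have opt: "gibbs \<Lambda> J \<beta> (UNIV::'r option set) (\<lambda>s. G' (s \<circ> Some) * spin_prod (s (Some k)) X * spin_prod (s None) X)
      = gibbs \<Lambda> J \<beta> UNIV (\<lambda>t. G' t * spin_prod (t k) X) * om \<Lambda> J \<beta> (\<lambda>\<sigma>. spin_prod \<sigma> X)" for X
    using gibbs_option[OF L fU, where A="\<lambda>t. G' t * spin_prod (t k) X" and B="\<lambda>\<sigma>. spin_prod \<sigma> X", of J \<beta>]
    by simp
  have "(\<lambda>s. G' (s \<circ> Some) * cov \<Lambda> \<Delta> (s (Some k)) (s None)) =
     (\<lambda>s. \<Sum>X\<in>Pow \<Lambda>. (1 / real (card \<Lambda>) * (\<Delta> X)\<^sup>2) * (G' (s \<circ> Some) * spin_prod (s (Some k)) X * spin_prod (s None) X))"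
    unfolding cov_expand by (simp add: sum_distrib_left mult_ac fun_eq_iff)
  then have "gibbs \<Lambda> J \<beta> (UNIV::'r option set) (\<lambda>s. G' (s \<circ> Some) * cov \<Lambda> \<Delta> (s (Some k)) (s None)) =
     (\<Sum>X\<in>Pow \<Lambda>. (1 / real (card \<Lambda>) * (\<Delta> X)\<^sup>2) * gibbs \<Lambda> J \<beta> (UNIV::'r option set) (\<lambda>s. G' (s \<circ> Some) * spin_prod (s (Some k)) X * spin_prod (s None) X))"
    by (simp only: gibbs_sum gibbs_cmult)
  also have "\<dots> = (\<Sum>X\<in>Pow \<Lambda>. (1 / real (card \<Lambda>) * (\<Delta> X)\<^sup>2) * (gibbs \<Lambda> J \<beta> UNIV (\<lambda>t. G' t * spin_prod (t k) X) * om \<Lambda> J \<beta> (\<lambda>\<sigma>. spin_prod \<sigma> X)))"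
    by (simp only: opt)
  finally show ?thesis by (simp add: sum_distrib_left mult_ac)
qed

lemma P3:
  assumes L: "finite \<Lambda>"
  shows "gibbs \<Lambda> J \<beta> (UNIV::'r::finite option option set) (\<lambda>s. G' (s \<circ> Some \<circ> Some) * cov \<Lambda> \<Delta> (s (Some None)) (s None)) =
    (1 / real (card \<Lambda>)) * (\<Sum>X\<in>Pow \<Lambda>. (\<Delta> X)\<^sup>2 * (gibbs \<Lambda> J \<beta> UNIV G' * (om \<Lambda> J \<beta> (\<lambda>\<sigma>. spin_prod \<sigma> X) * om \<Lambda> J \<beta> (\<lambda>\<sigma>. spin_prod \<sigma> X))))"
proof -
  have fU: "finite (UNIV::'r set)" by simp
  have fU2: "finite (UNIV::'r option set)" by simp
  have opt1: "gibbs \<Lambda> J \<beta> (UNIV::'r option set) (\<lambda>t. G' (t \<circ> Some) * spin_prod (t None) X)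
      = gibbs \<Lambda> J \<beta> UNIV G' * om \<Lambda> J \<beta> (\<lambda>\<sigma>. spin_prod \<sigma> X)" for X
    using gibbs_option[OF L fU, where A="G'" and B="\<lambda>\<sigma>. spin_prod \<sigma> X", of J \<beta>]
    by simp
  have opt: "gibbs \<Lambda> J \<beta> (UNIV::'r option option set) (\<lambda>s. G' (s \<circ> Some \<circ> Some) * spin_prod (s (Some None)) X * spin_prod (s None) X)
      = gibbs \<Lambda> J \<beta> UNIV G' * (om \<Lambda> J \<beta> (\<lambda>\<sigma>. spin_prod \<sigma> X) * om \<Lambda> J \<beta> (\<lambda>\<sigma>. spin_prod \<sigma> X))" for X
    using gibbs_option[OF L fU2, where A="\<lambda>t. G' (t \<circ> Some) * spin_prod (t None) X" and B="\<lambda>\<sigma>. spin_prod \<sigma> X", of J \<beta>]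
    by (simp add: opt1)
  have "(\<lambda>s. G' (s \<circ> Some \<circ> Some) * cov \<Lambda> \<Delta> (s (Some None)) (s None)) =
     (\<lambda>s. \<Sum>X\<in>Pow \<Lambda>. (1 / real (card \<Lambda>) * (\<Delta> X)\<^sup>2) * (G' (s \<circ> Some \<circ> Some) * spin_prod (s (Some None)) X * spin_prod (s None) X))"
    unfolding cov_expand by (simp add: sum_distrib_left mult_ac fun_eq_iff)
  then have "gibbs \<Lambda> J \<beta> (UNIV::'r option option set) (\<lambda>s. G' (s \<circ> Some \<circ> Some) * cov \<Lambda> \<Delta> (s (Some None)) (s None)) =
     (\<Sum>X\<in>Pow \<Lambda>. (1 / real (card \<Lambda>) * (\<Delta> X)\<^sup>2) * gibbs \<Lambda> J \<beta> (UNIV::'r option option set) (\<lambda>s. G' (s \<circ> Some \<circ> Some) * spin_prod (s (Some None)) X * spin_prod (s None) X))"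
    by (simp only: gibbs_sum gibbs_cmult)
  also have "\<dots> = (\<Sum>X\<in>Pow \<Lambda>. (1 / real (card \<Lambda>) * (\<Delta> X)\<^sup>2) * (gibbs \<Lambda> J \<beta> UNIV G' * (om \<Lambda> J \<beta> (\<lambda>\<sigma>. spin_prod \<sigma> X) * om \<Lambda> J \<beta> (\<lambda>\<sigma>. spin_prod \<sigma> X))))"
    by (simp only: opt)
  finally show ?thesis by (simp add: sum_distrib_left mult_ac)
qed

lemma P4:
  assumes L: "finite \<Lambda>"
  shows "gibbs \<Lambda> J \<beta> (UNIV::bool set) (\<lambda>s. cov \<Lambda> \<Delta> (s True) (s False)) =
    (1 / real (card \<Lambda>)) * (\<Sum>X\<in>Pow \<Lambda>. (\<Delta> X)\<^sup>2 * (om \<Lambda> J \<beta> (\<lambda>\<sigma>. spin_prod \<sigma> X) * om \<Lambda> J \<beta> (\<lambda>\<sigma>. spin_prod \<sigma> X)))"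
proof -
  have "gibbs \<Lambda> J \<beta> (UNIV::bool set) (\<lambda>s. cov \<Lambda> \<Delta> (s True) (s False)) =
     (\<Sum>X\<in>Pow \<Lambda>. (1 / real (card \<Lambda>) * (\<Delta> X)\<^sup>2) * gibbs \<Lambda> J \<beta> (UNIV::bool set) (\<lambda>s. spin_prod (s True) X * spin_prod (s False) X))"
    unfolding cov_expand by (simp only: gibbs_sum gibbs_cmult)
  also have "\<dots> = (\<Sum>X\<in>Pow \<Lambda>. (1 / real (card \<Lambda>) * (\<Delta> X)\<^sup>2) * (om \<Lambda> J \<beta> (\<lambda>\<sigma>. spin_prod \<sigma> X) * om \<Lambda> J \<beta> (\<lambda>\<sigma>. spin_prod \<sigma> X)))"
    using gibbs_bool[OF L, where A="\<lambda>\<sigma>. spin_prod \<sigma> X" and B="\<lambda>\<sigma>. spin_prod \<sigma> X" for X] by simp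
  finally show ?thesis by (simp add: sum_distrib_left mult_ac)
qed


lemma Av_const: "Av \<Lambda> (\<lambda>z. k) = k"
proof -
  have "prob_space (GM \<Lambda>)" by (rule prob_space_PiM) (simp add: prob_std_gauss)
  then show ?thesis unfolding Av_def by (simp add: prob_space.prob_space)
qed

theorem lemma6:
  fixes \<Delta> :: "(int^'d) set \<Rightarrow> real"
    and a b :: "int^'d"
    and \<beta> :: real
    and G :: "real^'r^'r \<Rightarrow> real"
  assumes transl_inv: "\<forall>X v. \<Delta> ((\<lambda>x. x + v) ` X) = \<Delta> X"
    and box_ne: "\<forall>i. a$i \<le> b$i"
    and G_bound: "\<forall>m. \<bar>G m\<bar> \<le> 1"
    and G_smooth: "smooth_fun G"
  defines "\<Lambda> \<equiv> lattice_box a b"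
  shows
   "(\<Sum>l\<in>(UNIV::'r set).
        Av \<Lambda> (\<lambda>z. Omega \<Lambda> \<Delta> \<beta> (UNIV::'r set) (\<lambda>s. h_energy \<Lambda> (coupling \<Delta> z) (s l)) z
                   * Omega \<Lambda> \<Delta> \<beta> (UNIV::'r set) (\<lambda>s. G (overlap_mat \<Lambda> \<Delta> s)) z)
      - Av \<Lambda> (\<lambda>z. Omega \<Lambda> \<Delta> \<beta> (UNIV::'r set) (\<lambda>s. h_energy \<Lambda> (coupling \<Delta> z) (s l)) z)
        * Av \<Lambda> (\<lambda>z. Omega \<Lambda> \<Delta> \<beta> (UNIV::'r set) (\<lambda>s. G (overlap_mat \<Lambda> \<Delta> s)) z))
    = - \<beta> * real CARD('r) *
       ((\<Sum>k\<in>(UNIV::'r set).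
           Av \<Lambda> (\<lambda>z. Omega \<Lambda> \<Delta> \<beta> (UNIV::'r option set)
              (\<lambda>s. G (overlap_mat \<Lambda> \<Delta> (s \<circ> Some)) * cov \<Lambda> \<Delta> (s (Some k)) (s None)) z))
        - (real CARD('r) + 1) *
           Av \<Lambda> (\<lambda>z. Omega \<Lambda> \<Delta> \<beta> (UNIV::'r option option set)
              (\<lambda>s. G (overlap_mat \<Lambda> \<Delta> (s \<circ> Some \<circ> Some)) * cov \<Lambda> \<Delta> (s (Some None)) (s None)) z)
        + Av \<Lambda> (\<lambda>z. Omega \<Lambda> \<Delta> \<beta> (UNIV::'r set) (\<lambda>s. G (overlap_mat \<Lambda> \<Delta> s)) z)
          * Av \<Lambda> (\<lambda>z. Omega \<Lambda> \<Delta> \<beta> (UNIV::bool set) (\<lambda>s. cov \<Lambda> \<Delta> (s True) (s False)) z))"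
proof -
  have L: "finite \<Lambda>" unfolding \<Lambda>_def by (rule finite_lattice_box)
  have fP: "finite (Pow \<Lambda>)" using L by simp
  define c where "c = 1 / real (card \<Lambda>)"
  define m where "m X z = om \<Lambda> (coupling \<Delta> z) \<beta> (\<lambda>\<sigma>. spin_prod \<sigma> X)" for X z
  define g where "g z = gibbs \<Lambda> (coupling \<Delta> z) \<beta> (UNIV::'r set) (\<lambda>s. G (overlap_mat \<Lambda> \<Delta> s))" for z
  define gk where "gk k X z = gibbs \<Lambda> (coupling \<Delta> z) \<beta> (UNIV::'r set) (\<lambda>s. G (overlap_mat \<Lambda> \<Delta> s) * spin_prod (s k) X)" for k X z
  define qc where "qc X = (if X = {} then 0 else 1::real)" for X :: "(int^'d) set"
  define R where "R = real CARD('r)"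
  define T3 where "T3 = Av \<Lambda> g"
  define a1 where "a1 X k = Av \<Lambda> (\<lambda>z. gk k X z * m X z)" for X k
  define a2 where "a2 X = Av \<Lambda> (\<lambda>z. g z * (m X z * m X z))" for X
  define a3 where "a3 X = Av \<Lambda> (\<lambda>z. m X z * m X z)" for X
  have bm_m[simp]: "bm (GM \<Lambda>) (m X)" for X unfolding m_def[abs_def] using L by simp
  have bm_g[simp]: "bm (GM \<Lambda>) g" unfolding g_def[abs_def] using L by simp
  have bm_gk[simp]: "bm (GM \<Lambda>) (gk k X)" for k X unfolding gk_def[abs_def] using L by simp
  have int[simp]: "integrable (GM \<Lambda>) F" if "bm (GM \<Lambda>) F" for F using bm_integrable[OF finite_GM that] .
  have intc[simp]: "integrable (GM \<Lambda>) (\<lambda>z. z X * F z)" if "X \<in> Pow \<Lambda>" "bm (GM \<Lambda>) F" for X F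
    using integrable_coord_bm[OF L that] .

  have Eh: "Omega \<Lambda> \<Delta> \<beta> (UNIV::'r set) (\<lambda>s. h_energy \<Lambda> (coupling \<Delta> z) (s l)) z = - c * (\<Sum>X\<in>Pow \<Lambda>. \<Delta> X * (z X * m X z))" for l z
  proof -
    have "Omega \<Lambda> \<Delta> \<beta> (UNIV::'r set) (\<lambda>s. h_energy \<Lambda> (coupling \<Delta> z) (s l)) z = om \<Lambda> (coupling \<Delta> z) \<beta> (h_energy \<Lambda> (coupling \<Delta> z))"
      unfolding Omega_def by (rule gibbs_single[OF L]) auto
    then show ?thesis unfolding om_h c_def m_def by simp
  qed
  have Av_zm: "Av \<Lambda> (\<lambda>z. z X * m X z) = \<beta> * \<Delta> X * (qc X - a3 X)" if X: "X \<in> Pow \<Lambda>" for X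
  proof -
    have "Av \<Lambda> (\<lambda>z. z X * m X z) = (\<integral>z. \<beta> * \<Delta> X * (qc X - m X z * m X z) \<partial>GM \<Lambda>)"
      unfolding Av_def m_def qc_def by (rule stein_m[OF L X])
    also have "\<dots> = \<beta> * \<Delta> X * (qc X - a3 X)"
      unfolding a3_def Av_def using Av_const[of \<Lambda> "qc X"] by (simp add: Av_def)
    finally show ?thesis .
  qed
  have Av_zmg: "Av \<Lambda> (\<lambda>z. z X * (m X z * g z)) = \<beta> * \<Delta> X * (qc X * T3 - a2 X + (\<Sum>k\<in>UNIV. a1 X k) - R * a2 X)"
    if X: "X \<in> Pow \<Lambda>" for X
  proof -
    have "Av \<Lambda> (\<lambda>z. z X * (m X z * g z)) =
      (\<integral>z. \<beta> * \<Delta> X * ((qc X - m X z * m X z) * g z + m X z * ((\<Sum>k\<in>UNIV. gk k X z) - R * g z * m X z)) \<partial>GM \<Lambda>)"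
      unfolding Av_def m_def qc_def g_def gk_def R_def by (rule stein_mg[OF L X finite_class.finite_UNIV])
    also have "\<dots> = (\<integral>z. \<beta> * \<Delta> X * (qc X * g z - g z * (m X z * m X z) + (\<Sum>k\<in>UNIV. gk k X z * m X z) - R * (g z * (m X z * m X z))) \<partial>GM \<Lambda>)"
      by (intro Bochner_Integration.integral_cong refl) (simp add: algebra_simps sum_distrib_right sum_distrib_left)
    also have "\<dots> = \<beta> * \<Delta> X * (qc X * T3 - a2 X + (\<Sum>k\<in>UNIV. a1 X k) - R * a2 X)"
      unfolding T3_def a1_def a2_def Av_def
      by (simp add: Bochner_Integration.integral_add Bochner_Integration.integral_diff Bochner_Integration.integral_sum)
    finally show ?thesis .
  qed
  have intc2[simp]: "integrable (GM \<Lambda>) (\<lambda>z. k * (z X * F z))" if "X \<in> Pow \<Lambda>" "bm (GM \<Lambda>) F" for X F k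
    using integrable_mult_right[OF intc[OF that]] .
  have intb2[simp]: "integrable (GM \<Lambda>) (\<lambda>z. k * F z)" if "bm (GM \<Lambda>) F" for F k
    using integrable_mult_right[OF int[OF that]] .
  have Og: "Omega \<Lambda> \<Delta> \<beta> (UNIV::'r set) (\<lambda>s. G (overlap_mat \<Lambda> \<Delta> s)) z = g z" for z
    unfolding Omega_def g_def ..
  have AvE: "Av \<Lambda> (\<lambda>z. Omega \<Lambda> \<Delta> \<beta> (UNIV::'r set) (\<lambda>s. h_energy \<Lambda> (coupling \<Delta> z) (s l)) z)
      = - c * (\<Sum>X\<in>Pow \<Lambda>. \<Delta> X * (\<beta> * \<Delta> X * (qc X - a3 X)))" for l
  proof -
    have "Av \<Lambda> (\<lambda>z. Omega \<Lambda> \<Delta> \<beta> (UNIV::'r set) (\<lambda>s. h_energy \<Lambda> (coupling \<Delta> z) (s l)) z)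
        = (\<integral>z. - c * (\<Sum>X\<in>Pow \<Lambda>. \<Delta> X * (z X * m X z)) \<partial>GM \<Lambda>)" unfolding Av_def Eh ..
    also have "\<dots> = - c * (\<Sum>X\<in>Pow \<Lambda>. \<Delta> X * Av \<Lambda> (\<lambda>z. z X * m X z))"
      unfolding Av_def by (simp add: Bochner_Integration.integral_sum)
    also have "\<dots> = - c * (\<Sum>X\<in>Pow \<Lambda>. \<Delta> X * (\<beta> * \<Delta> X * (qc X - a3 X)))"
      by (intro arg_cong[where f="\<lambda>x. - c * x"] sum.cong refl) (simp add: Av_zm)
    finally show ?thesis .
  qed
  have AvEg: "Av \<Lambda> (\<lambda>z. Omega \<Lambda> \<Delta> \<beta> (UNIV::'r set) (\<lambda>s. h_energy \<Lambda> (coupling \<Delta> z) (s l)) z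
                   * Omega \<Lambda> \<Delta> \<beta> (UNIV::'r set) (\<lambda>s. G (overlap_mat \<Lambda> \<Delta> s)) z)
      = - c * (\<Sum>X\<in>Pow \<Lambda>. \<Delta> X * (\<beta> * \<Delta> X * (qc X * T3 - a2 X + (\<Sum>k\<in>UNIV. a1 X k) - R * a2 X)))" for l
  proof -
    have "Av \<Lambda> (\<lambda>z. Omega \<Lambda> \<Delta> \<beta> (UNIV::'r set) (\<lambda>s. h_energy \<Lambda> (coupling \<Delta> z) (s l)) z
                   * Omega \<Lambda> \<Delta> \<beta> (UNIV::'r set) (\<lambda>s. G (overlap_mat \<Lambda> \<Delta> s)) z)
        = (\<integral>z. - c * (\<Sum>X\<in>Pow \<Lambda>. \<Delta> X * (z X * (m X z * g z))) \<partial>GM \<Lambda>)"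
      unfolding Av_def Eh Og by (simp add: sum_distrib_right sum_distrib_left mult_ac)
    also have "\<dots> = - c * (\<Sum>X\<in>Pow \<Lambda>. \<Delta> X * Av \<Lambda> (\<lambda>z. z X * (m X z * g z)))"
      unfolding Av_def by (simp add: Bochner_Integration.integral_sum)
    also have "\<dots> = - c * (\<Sum>X\<in>Pow \<Lambda>. \<Delta> X * (\<beta> * \<Delta> X * (qc X * T3 - a2 X + (\<Sum>k\<in>UNIV. a1 X k) - R * a2 X)))"
      by (intro arg_cong[where f="\<lambda>x. - c * x"] sum.cong refl) (simp add: Av_zmg)
    finally show ?thesis .
  qed
  have T1: "Av \<Lambda> (\<lambda>z. Omega \<Lambda> \<Delta> \<beta> (UNIV::'r option set)
              (\<lambda>s. G (overlap_mat \<Lambda> \<Delta> (s \<circ> Some)) * cov \<Lambda> \<Delta> (s (Some k)) (s None)) z)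
      = c * (\<Sum>X\<in>Pow \<Lambda>. (\<Delta> X)\<^sup>2 * a1 X k)" for k
  proof -
    have "Av \<Lambda> (\<lambda>z. Omega \<Lambda> \<Delta> \<beta> (UNIV::'r option set)
              (\<lambda>s. G (overlap_mat \<Lambda> \<Delta> (s \<circ> Some)) * cov \<Lambda> \<Delta> (s (Some k)) (s None)) z)
        = (\<integral>z. c * (\<Sum>X\<in>Pow \<Lambda>. (\<Delta> X)\<^sup>2 * (gk k X z * m X z)) \<partial>GM \<Lambda>)"
      unfolding Av_def Omega_def P2[OF L, where G'="\<lambda>t. G (overlap_mat \<Lambda> \<Delta> t)"] c_def gk_def m_def ..
    also have "\<dots> = c * (\<Sum>X\<in>Pow \<Lambda>. (\<Delta> X)\<^sup>2 * a1 X k)"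
      unfolding Av_def a1_def by (simp add: Bochner_Integration.integral_sum)
    finally show ?thesis .
  qed
  have T2: "Av \<Lambda> (\<lambda>z. Omega \<Lambda> \<Delta> \<beta> (UNIV::'r option option set)
              (\<lambda>s. G (overlap_mat \<Lambda> \<Delta> (s \<circ> Some \<circ> Some)) * cov \<Lambda> \<Delta> (s (Some None)) (s None)) z)
      = c * (\<Sum>X\<in>Pow \<Lambda>. (\<Delta> X)\<^sup>2 * a2 X)"
  proof -
    have "Av \<Lambda> (\<lambda>z. Omega \<Lambda> \<Delta> \<beta> (UNIV::'r option option set)
              (\<lambda>s. G (overlap_mat \<Lambda> \<Delta> (s \<circ> Some \<circ> Some)) * cov \<Lambda> \<Delta> (s (Some None)) (s None)) z)
        = (\<integral>z. c * (\<Sum>X\<in>Pow \<Lambda>. (\<Delta> X)\<^sup>2 * (g z * (m X z * m X z))) \<partial>GM \<Lambda>)"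
      unfolding Av_def Omega_def P3[OF L, where G'="\<lambda>t. G (overlap_mat \<Lambda> \<Delta> t)"] c_def g_def m_def ..
    also have "\<dots> = c * (\<Sum>X\<in>Pow \<Lambda>. (\<Delta> X)\<^sup>2 * a2 X)"
      unfolding Av_def a2_def by (simp add: Bochner_Integration.integral_sum)
    finally show ?thesis .
  qed
  have T4: "Av \<Lambda> (\<lambda>z. Omega \<Lambda> \<Delta> \<beta> (UNIV::bool set) (\<lambda>s. cov \<Lambda> \<Delta> (s True) (s False)) z)
      = c * (\<Sum>X\<in>Pow \<Lambda>. (\<Delta> X)\<^sup>2 * a3 X)"
  proof -
    have "Av \<Lambda> (\<lambda>z. Omega \<Lambda> \<Delta> \<beta> (UNIV::bool set) (\<lambda>s. cov \<Lambda> \<Delta> (s True) (s False)) z)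
        = (\<integral>z. c * (\<Sum>X\<in>Pow \<Lambda>. (\<Delta> X)\<^sup>2 * (m X z * m X z)) \<partial>GM \<Lambda>)"
      unfolding Av_def Omega_def P4[OF L] c_def m_def ..
    also have "\<dots> = c * (\<Sum>X\<in>Pow \<Lambda>. (\<Delta> X)\<^sup>2 * a3 X)"
      unfolding Av_def a3_def by (simp add: Bochner_Integration.integral_sum)
    finally show ?thesis .
  qed
  have T3': "Av \<Lambda> (\<lambda>z. Omega \<Lambda> \<Delta> \<beta> (UNIV::'r set) (\<lambda>s. G (overlap_mat \<Lambda> \<Delta> s)) z) = T3"
    unfolding Og T3_def ..
  define S1 where "S1 = (\<Sum>X\<in>Pow \<Lambda>. (\<Delta> X)\<^sup>2 * (\<Sum>k\<in>UNIV. a1 X k))"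
  define S2 where "S2 = (\<Sum>X\<in>Pow \<Lambda>. (\<Delta> X)\<^sup>2 * a2 X)"
  define S3 where "S3 = (\<Sum>X\<in>Pow \<Lambda>. (\<Delta> X)\<^sup>2 * a3 X)"
  define Sq where "Sq = (\<Sum>X\<in>Pow \<Lambda>. (\<Delta> X)\<^sup>2 * qc X)"
  have e1: "(\<Sum>X\<in>Pow \<Lambda>. \<Delta> X * (\<beta> * \<Delta> X * (qc X * T3 - a2 X + (\<Sum>k\<in>UNIV. a1 X k) - R * a2 X)))
      = \<beta> * (T3 * Sq - S2 + S1 - R * S2)"
  proof -
    have "(\<Sum>X\<in>Pow \<Lambda>. \<Delta> X * (\<beta> * \<Delta> X * (qc X * T3 - a2 X + (\<Sum>k\<in>UNIV. a1 X k) - R * a2 X)))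
      = (\<Sum>X\<in>Pow \<Lambda>. \<beta> * T3 * ((\<Delta> X)\<^sup>2 * qc X) - \<beta> * ((\<Delta> X)\<^sup>2 * a2 X) + \<beta> * ((\<Delta> X)\<^sup>2 * (\<Sum>k\<in>UNIV. a1 X k)) - \<beta> * R * ((\<Delta> X)\<^sup>2 * a2 X))"
      by (intro sum.cong refl) (simp add: algebra_simps power2_eq_square)
    also have "\<dots> = \<beta> * (T3 * Sq - S2 + S1 - R * S2)"
      unfolding S1_def S2_def Sq_def
      by (simp add: sum.distrib sum_subtractf sum_distrib_left[symmetric] algebra_simps)
    finally show ?thesis .
  qed
  have e2: "(\<Sum>X\<in>Pow \<Lambda>. \<Delta> X * (\<beta> * \<Delta> X * (qc X - a3 X))) = \<beta> * (Sq - S3)"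
  proof -
    have "(\<Sum>X\<in>Pow \<Lambda>. \<Delta> X * (\<beta> * \<Delta> X * (qc X - a3 X)))
      = (\<Sum>X\<in>Pow \<Lambda>. \<beta> * ((\<Delta> X)\<^sup>2 * qc X) - \<beta> * ((\<Delta> X)\<^sup>2 * a3 X))"
      by (intro sum.cong refl) (simp add: algebra_simps power2_eq_square)
    also have "\<dots> = \<beta> * (Sq - S3)"
      unfolding S3_def Sq_def
      by (simp add: sum_subtractf sum_distrib_left[symmetric] algebra_simps)
    finally show ?thesis .
  qed
  have e3: "(\<Sum>k\<in>UNIV. c * (\<Sum>X\<in>Pow \<Lambda>. (\<Delta> X)\<^sup>2 * a1 X k)) = c * S1"
    unfolding S1_def by (simp add: sum_distrib_left sum.swap[of _ "UNIV::'r set"])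
  show ?thesis
    unfolding AvEg AvE T1 T2 T3' T4 e1 e2 e3 sum_constant
    unfolding S2_def[symmetric] S3_def[symmetric] R_def[symmetric]
    by (simp add: algebra_simps)
qed


end
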